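(* Let $s\in C$ and let $\hat\kappa$ be a prime broadcast center of $T$ under $s$. It is known that the subgraph of $T$ induced by $B^s$ is a star. Then $\hat\kappa$ is a center of this star; equivalently, every vertex of $B^s\setminus\{\hat\kappa\}$ is adjacent to $\hat\kappa$ in $T$.
   Context: $T$ is a finite tree; each edge $(u,v)$ carries an interval $[w^-_{u,v},w^+_{u,v}]$ of non-negative reals. A scenario $s$ assigns to every edge a weight $w^s_{u,v}\in[w^-_{u,v},w^+_{u,v}]$; $C$ is the set of all scenarios. A constant $\rho>0$ is fixed. Broadcast time (postal model): for a subtree $G$ of $T$ and $u\in V(G)$, $b^s(u,G)=0$ if $u$ has no neighbour in $G$; otherwise, if $v_1,\dots,v_h$ are the neighbours of $u$ in $G$ and $G_{v}$ is the component of $G-u$ containing $v$, $b^s(u,G)=\min_{\pi}\max_{1\le k\le h}\big(k\rho+w^s_{u,v_{\pi(k)}}+b^s(v_{\pi(k)},G_{v_{\pi(k)}})\big)$ over permutations $\pi$. $B^s=\{u: b^s(u,T)\le b^s(v,T)\ \forall v\in V(T)\}$ is the set of broadcast centers. For distinct $x,y$, $T_{x,y}$ is the component of $T-x$ containing $y$ and $\bar T_{x,y}$ the subtree induced by $V(T)\setminus V(T_{x,y})$. A vertex $\hat\kappa\in B^s$ is a prime broadcast center under $s$ if $b^s(\hat\kappa,\bar T_{\hat\kappa,u})\ge b^s(u,\bar T_{u,\hat\kappa})$ for every neighbour $u$ of $\hat\kappa$. A star is a tree with one or two vertices, or with exactly one vertex of degree greater than one; in the last case that vertex is the center, in a one-vertex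 star the vertex is the center, and in a two-vertex star either vertex is a center. *)

theory Defs
  imports Complex_Main
begin

definition restr :: "('a \<Rightarrow> 'a \<Rightarrow> bool) \<Rightarrow> 'a set \<Rightarrow> 'a \<Rightarrow> 'a \<Rightarrow> bool" where
  "restr E A = (\<lambda>x y. E x y \<and> x \<in> A \<and> y \<in> A)"

text \<open>Vertex set of the component of the subgraph induced by A containing v (v assumed in A).\<close>
definition comp :: "('a \<Rightarrow> 'a \<Rightarrow> bool) \<Rightarrow> 'a set \<Rightarrow> 'a \<Rightarrow> 'a set" where
  "comp E A v = {x. (restr E A)\<^sup>*\<^sup>* v x}"

definition undirected_edges :: "('a \<Rightarrow> 'a \<Rightarrow> bool) \<Rightarrow> 'a set \<Rightarrow> 'a set set" where
  "undirected_edges E V = {{u, v} | u v. u \<in> V \<and> v \<in> V \<and> E u v}"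

definition is_tree :: "('a \<Rightarrow> 'a \<Rightarrow> bool) \<Rightarrow> 'a set \<Rightarrow> bool" where
  "is_tree E V \<longleftrightarrow> finite V \<and> V \<noteq> {} \<and>
     (\<forall>x y. E x y \<longrightarrow> E y x) \<and> (\<forall>x. \<not> E x x) \<and>
     (\<forall>x y. E x y \<longrightarrow> x \<in> V \<and> y \<in> V) \<and>
     (\<forall>x\<in>V. \<forall>y\<in>V. (restr E V)\<^sup>*\<^sup>* x y) \<and>
     card (undirected_edges E V) = card V - 1"

definition is_scenario :: "('a \<Rightarrow> 'a \<Rightarrow> bool) \<Rightarrow> ('a \<Rightarrow> 'a \<Rightarrow> real) \<Rightarrow> ('a \<Rightarrow> 'a \<Rightarrow> real)
    \<Rightarrow> ('a \<Rightarrow> 'a \<Rightarrow> real) \<Rightarrow> bool" where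
  "is_scenario E lo hi w \<longleftrightarrow>
     (\<forall>u v. E u v \<longrightarrow> w u v = w v u \<and> lo u v \<le> w u v \<and> w u v \<le> hi u v)"

definition valid_intervals :: "('a \<Rightarrow> 'a \<Rightarrow> bool) \<Rightarrow> ('a \<Rightarrow> 'a \<Rightarrow> real) \<Rightarrow> ('a \<Rightarrow> 'a \<Rightarrow> real) \<Rightarrow> bool" where
  "valid_intervals E lo hi \<longleftrightarrow>
     (\<forall>u v. E u v \<longrightarrow> lo u v = lo v u \<and> hi u v = hi v u \<and> 0 \<le> lo u v \<and> lo u v \<le> hi u v)"

text \<open>Broadcast time in the postal model, b(u,G) for the subtree induced by vertex set S.
  Defined with a fuel argument; the fuel card S suffices since components of S - {u}
  are strictly smaller.\<close>
fun bt :: "nat \<Rightarrow> ('a \<Rightarrow> 'a \<Rightarrow> bool) \<Rightarrow> ('a \<Rightarrow> 'a \<Rightarrow> real) \<Rightarrow> real \<Rightarrow> 'a \<Rightarrow> 'a set \<Rightarrow> real" where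
  "bt 0 E w \<rho> u S = 0"
| "bt (Suc n) E w \<rho> u S =
     (let N = {v \<in> S. E u v} in
      if N = {} then 0 else
      Min ((\<lambda>xs. Max ((\<lambda>k. real (Suc k) * \<rho> + w u (xs ! k)
                              + bt n E w \<rho> (xs ! k) (comp E (S - {u}) (xs ! k))) ` {..<length xs}))
           ` {xs. distinct xs \<and> set xs = N}))"

definition btime :: "('a \<Rightarrow> 'a \<Rightarrow> bool) \<Rightarrow> ('a \<Rightarrow> 'a \<Rightarrow> real) \<Rightarrow> real \<Rightarrow> 'a \<Rightarrow> 'a set \<Rightarrow> real" where
  "btime E w \<rho> u S = bt (card S) E w \<rho> u S"

definition bcenters :: "('a \<Rightarrow> 'a \<Rightarrow> bool) \<Rightarrow> 'a set \<Rightarrow> ('a \<Rightarrow> 'a \<Rightarrow> real) \<Rightarrow> real \<Rightarrow> 'a set" where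
  "bcenters E V w \<rho> = {u \<in> V. \<forall>v\<in>V. btime E w \<rho> u V \<le> btime E w \<rho> v V}"

definition Tsub :: "('a \<Rightarrow> 'a \<Rightarrow> bool) \<Rightarrow> 'a set \<Rightarrow> 'a \<Rightarrow> 'a \<Rightarrow> 'a set" where
  "Tsub E V x y = comp E (V - {x}) y"

definition Tbar :: "('a \<Rightarrow> 'a \<Rightarrow> bool) \<Rightarrow> 'a set \<Rightarrow> 'a \<Rightarrow> 'a \<Rightarrow> 'a set" where
  "Tbar E V x y = V - Tsub E V x y"

definition prime_bcenter :: "('a \<Rightarrow> 'a \<Rightarrow> bool) \<Rightarrow> 'a set \<Rightarrow> ('a \<Rightarrow> 'a \<Rightarrow> real) \<Rightarrow> real \<Rightarrow> 'a \<Rightarrow> bool" where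
  "prime_bcenter E V w \<rho> k \<longleftrightarrow> k \<in> bcenters E V w \<rho> \<and>
     (\<forall>u. E k u \<longrightarrow> btime E w \<rho> k (Tbar E V k u) \<ge> btime E w \<rho> u (Tbar E V u k))"

definition is_star :: "('a \<Rightarrow> 'a \<Rightarrow> bool) \<Rightarrow> 'a set \<Rightarrow> bool" where
  "is_star E B \<longleftrightarrow> is_tree (restr E B) B \<and>
     (card B \<le> 2 \<or> card {x \<in> B. 1 < card {y \<in> B. E x y}} = 1)"

definition star_center :: "('a \<Rightarrow> 'a \<Rightarrow> bool) \<Rightarrow> 'a set \<Rightarrow> 'a \<Rightarrow> bool" where
  "star_center E B c \<longleftrightarrow> c \<in> B \<and> (card B \<le> 2 \<or> 1 < card {y \<in> B. E c y})"

end

theory Submission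
  imports Defs
begin

lemma comp_self: "v \<in> comp E A v" by (simp add: comp_def)

lemma comp_subset: assumes "v \<in> A" shows "comp E A v \<subseteq> A"
proof
  fix x assume "x \<in> comp E A v"
  hence "(restr E A)\<^sup>*\<^sup>* v x" by (simp add: comp_def)
  thus "x \<in> A" using assms by (induction rule: rtranclp_induct) (auto simp: restr_def)
qed

lemma restr_sym_rt:
  assumes sym: "\<forall>x y. E x y \<longrightarrow> E y x" and "(restr E A)\<^sup>*\<^sup>* x y"
  shows "(restr E A)\<^sup>*\<^sup>* y x"
  using assms(2)
proof (induction rule: rtranclp_induct)
  case base then show ?case by simp
next
  case (step y z)
  have "restr E A z y" using step(2) sym by (auto simp: restr_def)
  thus ?case using step(3) by (meson converse_rtranclp_into_rtranclp)
qed

lemma comp_move: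
  assumes "(restr E A)\<^sup>*\<^sup>* a x" "comp E A a \<subseteq> A'"
  shows "(restr E A')\<^sup>*\<^sup>* a x"
  using assms(1)
proof (induction rule: rtranclp_induct)
  case base then show ?case by simp
next
  case (step y z)
  have "y \<in> comp E A a" "z \<in> comp E A a"
    using step(1,2) by (auto simp: comp_def)
  hence "restr E A' y z" using step(2) assms(2) by (auto simp: restr_def)
  thus ?case using step(3) by simp
qed

lemma comp_mono_sub: assumes "comp E A a \<subseteq> A'" shows "comp E A a \<subseteq> comp E A' a"
proof
  fix x assume "x \<in> comp E A a"
  hence "(restr E A)\<^sup>*\<^sup>* a x" by (simp add: comp_def)
  hence "(restr E A')\<^sup>*\<^sup>* a x" using comp_move assms by metis
  thus "x \<in> comp E A' a" by (simp add: comp_def)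
qed

lemma comp_mono: "A \<subseteq> A' \<Longrightarrow> comp E A a \<subseteq> comp E A' a"
proof -
  assume "A \<subseteq> A'"
  hence "restr E A \<le> restr E A'" by (auto simp: restr_def)
  hence "(restr E A)\<^sup>*\<^sup>* \<le> (restr E A')\<^sup>*\<^sup>*" by (rule rtranclp_mono)
  thus ?thesis by (auto simp: comp_def)
qed

lemma comp_sym:
  assumes "\<forall>x y. E x y \<longrightarrow> E y x" "x \<in> comp E A a" shows "a \<in> comp E A x"
proof -
  have "(restr E A)\<^sup>*\<^sup>* a x" using assms(2) by (simp add: comp_def)
  hence "(restr E A)\<^sup>*\<^sup>* x a" using restr_sym_rt assms(1) by metis
  thus ?thesis by (simp add: comp_def)
qed

lemma comp_trans: "x \<in> comp E A a \<Longrightarrow> y \<in> comp E A x \<Longrightarrow> y \<in> comp E A a"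
  by (auto simp: comp_def)

lemma edges_lower:
  assumes fin: "finite V" and r: "r \<in> V" and conn: "\<forall>x\<in>V. (restr E V)\<^sup>*\<^sup>* r x"
    and sym: "\<forall>x y. E x y \<longrightarrow> E y x"
  shows "card V - 1 \<le> card (undirected_edges E V)"
proof -
  let ?R = "restr E V"
  define d where "d x = (LEAST n. (?R ^^ n) r x)" for x
  have ex: "\<exists>n. (?R ^^ n) r x" if "x \<in> V" for x
    using conn that by (simp add: rtranclp_power)
  have par: "\<exists>y. ?R y x \<and> d y < d x" if "x \<in> V - {r}" for x
  proof -
    have dx: "(?R ^^ d x) r x" unfolding d_def using ex[of x] that by (auto intro: LeastI_ex)
    have "d x \<noteq> 0"
    proof
      assume "d x = 0" hence "x = r" using dx by simp
      thus False using that by simp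
    qed
    then obtain m where m: "d x = Suc m" by (cases "d x") auto
    with dx obtain y where y: "(?R ^^ m) r y" "?R y x" by (auto elim: relpowp_Suc_E)
    have "d y \<le> m" unfolding d_def using y(1) by (rule Least_le)
    thus ?thesis using y m by auto
  qed
  define p where "p x = (SOME y. ?R y x \<and> d y < d x)" for x
  have pp: "?R (p x) x \<and> d (p x) < d x" if "x \<in> V - {r}" for x
    unfolding p_def using someI_ex[OF par[OF that]] .
  define f where "f x = {x, p x}" for x
  have sub: "f ` (V - {r}) \<subseteq> undirected_edges E V"
  proof
    fix e assume "e \<in> f ` (V - {r})"
    then obtain x where x: "x \<in> V - {r}" "e = {x, p x}" by (auto simp: f_def)
    have "E x (p x)" "p x \<in> V" using pp[OF x(1)] sym by (auto simp: restr_def)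
    thus "e \<in> undirected_edges E V" unfolding undirected_edges_def
      by (rule_tac CollectI, rule_tac exI[of _ x], rule_tac exI[of _ "p x"]) (use x in auto)
  qed
  have inj: "inj_on f (V - {r})"
  proof (rule inj_onI)
    fix x y assume x: "x \<in> V - {r}" and y: "y \<in> V - {r}" and e: "f x = f y"
    show "x = y"
    proof (rule ccontr)
      assume "x \<noteq> y"
      with e have "x = p y" "y = p x" by (auto simp: f_def doubleton_eq_iff)
      thus False using pp[OF x] pp[OF y] by auto
    qed
  qed
  have fe: "finite (undirected_edges E V)"
  proof (rule finite_subset)
    show "undirected_edges E V \<subseteq> Pow V"
      unfolding undirected_edges_def by auto
  qed (use fin in simp)
  have "card (V - {r}) \<le> card (undirected_edges E V)"
    using card_inj_on_le[OF inj sub fe] .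
  thus ?thesis using r fin by simp
qed

lemma tree_props:
  assumes "is_tree E V"
  shows "finite V" "\<forall>x y. E x y \<longrightarrow> E y x" "\<forall>x. \<not> E x x" "\<forall>x y. E x y \<longrightarrow> x \<in> V \<and> y \<in> V"
    "\<forall>x\<in>V. \<forall>y\<in>V. (restr E V)\<^sup>*\<^sup>* x y" "card (undirected_edges E V) = card V - 1"
  using assms unfolding is_tree_def by auto

lemma tree_disj:
  assumes T: "is_tree E V" and kc: "E k c"
  shows "comp E (V-{k}) c \<inter> comp E (V-{c}) k = {}"
proof (rule ccontr)
  assume "comp E (V-{k}) c \<inter> comp E (V-{c}) k \<noteq> {}"
  then obtain x where x1: "(restr E (V-{k}))\<^sup>*\<^sup>* c x" and x2: "(restr E (V-{c}))\<^sup>*\<^sup>* k x"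
    by (auto simp: comp_def)
  note tp = tree_props[OF T]
  have kV: "k \<in> V" and cV: "c \<in> V" using tp(4) kc by auto
  have kc': "k \<noteq> c" using tp(3) kc by auto
  define E' where "E' = (\<lambda>x y. E x y \<and> {x,y} \<noteq> {k,c})"
  have ue: "undirected_edges E' V = undirected_edges E V - {{k,c}}"
    unfolding undirected_edges_def E'_def by auto
  have kcin: "{k,c} \<in> undirected_edges E V" unfolding undirected_edges_def using kV cV kc by blast
  have fe: "finite (undirected_edges E V)"
    by (rule finite_subset[of _ "Pow V"]) (auto simp: undirected_edges_def tp(1))
  have c1: "card (undirected_edges E' V) = card V - 1 - 1"
    using ue card_Diff_singleton[OF kcin] tp(6) by simp
  have symE': "\<forall>x y. E' x y \<longrightarrow> E' y x" using tp(2) by (auto simp: E'_def insert_commute)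
  have "restr E (V-{k}) \<le> restr E' V" by (auto simp: restr_def E'_def doubleton_eq_iff)
  hence p1: "(restr E' V)\<^sup>*\<^sup>* c x" using x1 rtranclp_mono by (metis predicate2D)
  have "restr E (V-{c}) \<le> restr E' V" by (auto simp: restr_def E'_def doubleton_eq_iff)
  hence p2: "(restr E' V)\<^sup>*\<^sup>* k x" using x2 rtranclp_mono by (metis predicate2D)
  have kc2: "(restr E' V)\<^sup>*\<^sup>* k c" using p2 restr_sym_rt[OF symE' p1] by (rule rtranclp_trans)
  have ck2: "(restr E' V)\<^sup>*\<^sup>* c k" using restr_sym_rt[OF symE' kc2] .
  have stp: "(restr E' V)\<^sup>*\<^sup>* a b" if "restr E V a b" for a b
  proof (cases "{a,b} = {k,c}")
    case True
    hence "(a = k \<and> b = c) \<or> (a = c \<and> b = k)" by (auto simp: doubleton_eq_iff)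
    thus ?thesis using kc2 ck2 by auto
  next
    case False
    hence "restr E' V a b" using that by (auto simp: restr_def E'_def)
    thus ?thesis by simp
  qed
  have conn': "\<forall>y\<in>V. (restr E' V)\<^sup>*\<^sup>* k y"
  proof
    fix y assume "y \<in> V"
    hence "(restr E V)\<^sup>*\<^sup>* k y" using tp(5) kV by auto
    thus "(restr E' V)\<^sup>*\<^sup>* k y"
    proof (induction rule: rtranclp_induct)
      case base then show ?case by simp
    next
      case (step y z) then show ?case using stp[of y z] by (metis rtranclp_trans)
    qed
  qed
  have "card V - 1 \<le> card (undirected_edges E' V)"
    by (rule edges_lower[OF tp(1) kV conn' symE'])
  moreover have "card {k, c} \<le> card V" using kV cV tp(1) by (intro card_mono) auto
  hence "2 \<le> card V" using kc' by simp
  ultimately show False using c1 by simp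
qed

lemma tree_cover:
  assumes T: "is_tree E V" and kc: "E k c" and x: "x \<in> V"
  shows "x \<in> comp E (V-{k}) c \<or> x \<in> comp E (V-{c}) k"
proof -
  note tp = tree_props[OF T]
  have kV: "k \<in> V" and cV: "c \<in> V" using tp(4) kc by auto
  have kc': "k \<noteq> c" using tp(3) kc by auto
  have "(restr E V)\<^sup>*\<^sup>* x k" using tp(5) x kV by auto
  thus ?thesis
  proof (induction rule: converse_rtranclp_induct)
    case base then show ?case by (simp add: comp_self)
  next
    case (step y z)
    show ?case
    proof (cases "y = k")
      case True then show ?thesis by (simp add: comp_self)
    next
      case yk: False
      show ?thesis
      proof (cases "y = c")
        case True then show ?thesis by (simp add: comp_self)
      next
        case yc: False
        have yV: "y \<in> V" and Eyz: "E z y" using step(1) tp(2) by (auto simp: restr_def)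
        from step(3) show ?thesis
        proof
          assume zc: "z \<in> comp E (V-{k}) c"
          have "z \<in> V - {k}" using comp_subset[of c "V-{k}" E] zc cV kc' by auto
          hence "restr E (V-{k}) z y" using yV yk Eyz by (auto simp: restr_def)
          thus ?thesis using zc by (auto simp: comp_def intro: rtranclp.rtrancl_into_rtrancl)
        next
          assume zc: "z \<in> comp E (V-{c}) k"
          have "z \<in> V - {c}" using comp_subset[of k "V-{c}" E] zc kV kc' by auto
          hence "restr E (V-{c}) z y" using yV yc Eyz by (auto simp: restr_def)
          thus ?thesis using zc by (auto simp: comp_def intro: rtranclp.rtrancl_into_rtrancl)
        qed
      qed
    qed
  qed
qed

lemma tree_split:
  assumes T: "is_tree E V" and kc: "E k c"
  shows "V - comp E (V-{k}) c = comp E (V-{c}) k"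
proof -
  note tp = tree_props[OF T]
  have kV: "k \<in> V" and cV: "c \<in> V" using tp(4) kc by auto
  have kc': "k \<noteq> c" using tp(3) kc by auto
  have "comp E (V-{c}) k \<subseteq> V" using comp_subset[of k "V-{c}" E] kV kc' by auto
  thus ?thesis using tree_disj[OF T kc] tree_cover[OF T kc] by blast
qed

lemma Tbar_eq:
  assumes T: "is_tree E V" and kc: "E k c"
  shows "Tbar E V k c = comp E (V-{c}) k"
  using tree_split[OF assms] by (simp add: Tbar_def Tsub_def)

lemma card2: "finite A \<Longrightarrow> a \<in> A \<Longrightarrow> b \<in> A \<Longrightarrow> a \<noteq> b \<Longrightarrow> 2 \<le> card A"
  using card_mono[of A "{a,b}"] by auto

lemma card3: "finite A \<Longrightarrow> a \<in> A \<Longrightarrow> b \<in> A \<Longrightarrow> c \<in> A \<Longrightarrow> a \<noteq> b \<Longrightarrow> a \<noteq> c \<Longrightarrow> b \<noteq> c \<Longrightarrow> 3 \<le> card A"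
  using card_mono[of A "{a,b,c}"] by auto

lemma star_path:
  assumes S: "is_star E B" and fin: "finite B" and irr: "\<forall>x. \<not> E x x"
    and sym: "\<forall>x y. E x y \<longrightarrow> E y x"
    and kB: "k \<in> B" and vB: "v \<in> B" and kv: "k \<noteq> v" and nE: "\<not> E k v"
  shows "\<exists>c\<in>B. E k c \<and> E c v"
proof -
  let ?R = "restr E B"
  have tB: "is_tree (restr E B) B" and st: "card B \<le> 2 \<or> card {x \<in> B. 1 < card {y \<in> B. E x y}} = 1"
    using S by (auto simp: is_star_def)
  have rr: "restr (restr E B) B = restr E B" by (auto simp: restr_def fun_eq_iff)
  have "?R\<^sup>*\<^sup>* k v" using tree_props(5)[OF tB] kB vB rr by auto
  then obtain n where "(?R ^^ n) k v" by (auto simp: rtranclp_power)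
  define d where "d = (LEAST n. (?R ^^ n) k v)"
  have dR: "(?R ^^ d) k v" unfolding d_def using \<open>(?R ^^ n) k v\<close> by (rule LeastI)
  have mn: "\<not> (?R ^^ n') k v" if "n' < d" for n' using not_less_Least[of n' "\<lambda>n. (?R ^^ n) k v"] that
    unfolding d_def by blast
  have d0: "d \<noteq> 0" using dR kv by (cases d) auto
  have d1: "d \<noteq> 1" using dR nE by (auto simp: restr_def)
  show ?thesis
  proof (cases "d = 2")
    case True
    with dR have "(?R ^^ Suc (Suc 0)) k v" by (metis numeral_2_eq_2)
    then obtain x1 where "?R k x1" "(?R ^^ Suc 0) x1 v" using relpowp_Suc_E2 by metis
    hence "?R k x1" "?R x1 v" by auto
    thus ?thesis by (auto simp: restr_def)
  next
    case False
    with d0 d1 obtain m where dm: "d = Suc (Suc (Suc m))"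
      by (metis One_nat_def Suc_1 not0_implies_Suc)
    obtain x1 where a1: "?R k x1" "(?R ^^ Suc (Suc m)) x1 v"
      using relpowp_Suc_E2[OF dR[unfolded dm]] by metis
    obtain x2 where a2: "?R x1 x2" "(?R ^^ Suc m) x2 v" using relpowp_Suc_E2[OF a1(2)] by metis
    obtain x3 where a3: "?R x2 x3" "(?R ^^ m) x3 v" using relpowp_Suc_E2[OF a2(2)] by metis
    have x2k: "x2 \<noteq> k"
    proof
      assume "x2 = k"
      hence "(?R ^^ Suc m) k v" using a2(2) by metis
      thus False using mn[of "Suc m"] dm by simp
    qed
    have x31: "x3 \<noteq> x1"
    proof
      assume "x3 = x1"
      hence "(?R ^^ m) x1 v" using a3(2) by metis
      hence "(?R ^^ Suc m) k v" using a1(1) by (metis relpowp_Suc_I2)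
      thus False using mn[of "Suc m"] dm by auto
    qed
    have B1: "x1 \<in> B" "x2 \<in> B" "x3 \<in> B" using a1 a2 a3 by (auto simp: restr_def)
    have e: "E x1 k" "E x1 x2" "E x2 x1" "E x2 x3" using a1 a2 a3 sym by (auto simp: restr_def)
    have k1: "k \<noteq> x1" and x12: "x1 \<noteq> x2" using e irr by auto
    have g1: "1 < card {y \<in> B. E x1 y}"
      using card2[of "{y \<in> B. E x1 y}" k x2] fin kB B1 e x2k by auto
    have g2: "1 < card {y \<in> B. E x2 y}"
      using card2[of "{y \<in> B. E x2 y}" x1 x3] fin B1 e x31 by auto
    have "2 \<le> card {x \<in> B. 1 < card {y \<in> B. E x y}}"
      using card2[of "{x \<in> B. 1 < card {y \<in> B. E x y}}" x1 x2] fin B1 g1 g2 x12 by auto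
    moreover have "3 \<le> card B" using card3[of B k x1 x2] fin kB B1 k1 x12 x2k by auto
    ultimately show ?thesis using st by auto
  qed
qed

lemma bt_fuel:
  assumes irr: "\<forall>x. \<not> E x x"
  shows "finite S \<Longrightarrow> u \<in> S \<Longrightarrow> card S \<le> n \<Longrightarrow> card S \<le> m \<Longrightarrow> bt n E w \<rho> u S = bt m E w \<rho> u S"
proof (induction n arbitrary: m u S)
  case 0 then show ?case using card_gt_0_iff[of S] by auto
next
  case (Suc n)
  obtain m' where m: "m = Suc m'" using Suc.prems card_gt_0_iff[of S] by (cases m) auto
  let ?N = "{v \<in> S. E u v}"
  have eq: "bt n E w \<rho> y (comp E (S-{u}) y) = bt m' E w \<rho> y (comp E (S-{u}) y)" if "y \<in> ?N" for y
  proof -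
    have y: "y \<in> S - {u}" using that irr by auto
    have sub: "comp E (S-{u}) y \<subseteq> S - {u}" using comp_subset[OF y] .
    have fc: "finite (comp E (S-{u}) y)" using finite_subset[OF sub] Suc.prems(1) by simp
    have "card (comp E (S-{u}) y) \<le> card (S - {u})" using card_mono[OF _ sub] Suc.prems(1) by simp
    also have "\<dots> = card S - 1" using Suc.prems by simp
    finally have c: "card (comp E (S-{u}) y) \<le> card S - 1" .
    show ?thesis
      by (rule Suc.IH[OF fc comp_self[of y E "S-{u}"]]) (use c Suc.prems m in auto)
  qed
  have eq': "bt n E w \<rho> (xs!j) (comp E (S-{u}) (xs!j)) = bt m' E w \<rho> (xs!j) (comp E (S-{u}) (xs!j))"
    if "xs \<in> {xs. distinct xs \<and> set xs = ?N}" "j \<in> {..<length xs}" for xs j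
  proof -
    have "xs!j \<in> set xs" using that(2) by simp
    hence "xs!j \<in> ?N" using that(1) by simp
    thus ?thesis by (rule eq)
  qed
  have "(\<lambda>xs. Max ((\<lambda>k. real (Suc k) * \<rho> + w u (xs ! k) + bt n E w \<rho> (xs ! k) (comp E (S - {u}) (xs ! k))) ` {..<length xs}))
         ` {xs. distinct xs \<and> set xs = ?N}
      = (\<lambda>xs. Max ((\<lambda>k. real (Suc k) * \<rho> + w u (xs ! k) + bt m' E w \<rho> (xs ! k) (comp E (S - {u}) (xs ! k))) ` {..<length xs}))
         ` {xs. distinct xs \<and> set xs = ?N}"
    by (rule image_cong[OF refl], rule arg_cong[where f=Max], rule image_cong[OF refl])
       (simp only: eq')
  thus ?case unfolding m bt.simps(2) Let_def by (simp only:)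
qed

definition bterm where
  "bterm E w \<rho> u S xs j = real (Suc j) * \<rho> + w u (xs ! j) + btime E w \<rho> (xs ! j) (comp E (S - {u}) (xs ! j))"

definition nlists where "nlists E u S = {xs. distinct xs \<and> set xs = {v \<in> S. E u v}}"

lemma btime_eq:
  assumes irr: "\<forall>x. \<not> E x x" and fin: "finite S" and u: "u \<in> S" and ne: "{v \<in> S. E u v} \<noteq> {}"
  shows "btime E w \<rho> u S = Min ((\<lambda>xs. Max (bterm E w \<rho> u S xs ` {..<length xs})) ` nlists E u S)"
proof -
  obtain n where n: "card S = Suc n" using fin u card_gt_0_iff[of S] by (cases "card S") auto
  let ?N = "{v \<in> S. E u v}"
  have eq: "bt n E w \<rho> y (comp E (S-{u}) y) = btime E w \<rho> y (comp E (S-{u}) y)" if "y \<in> ?N" for y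
  proof -
    have y: "y \<in> S - {u}" using that irr by auto
    have sub: "comp E (S-{u}) y \<subseteq> S - {u}" using comp_subset[OF y] .
    have fc: "finite (comp E (S-{u}) y)" using finite_subset[OF sub] fin by simp
    have "card (comp E (S-{u}) y) \<le> card (S - {u})" using card_mono[OF _ sub] fin by simp
    also have "\<dots> = n" using n u fin by simp
    finally have c: "card (comp E (S-{u}) y) \<le> n" .
    show ?thesis unfolding btime_def
      by (rule bt_fuel[where E=E, OF irr fc comp_self[of y E "S-{u}"]]) (use c in auto)
  qed
  have eq': "bt n E w \<rho> (xs!j) (comp E (S-{u}) (xs!j)) = btime E w \<rho> (xs!j) (comp E (S-{u}) (xs!j))"
    if "xs \<in> {xs. distinct xs \<and> set xs = ?N}" "j \<in> {..<length xs}" for xs j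
  proof -
    have "xs!j \<in> set xs" using that(2) by simp
    hence "xs!j \<in> ?N" using that(1) by simp
    thus ?thesis by (rule eq)
  qed
  have "(\<lambda>xs. Max ((\<lambda>k. real (Suc k) * \<rho> + w u (xs ! k) + bt n E w \<rho> (xs ! k) (comp E (S - {u}) (xs ! k))) ` {..<length xs}))
         ` {xs. distinct xs \<and> set xs = ?N}
      = (\<lambda>xs. Max (bterm E w \<rho> u S xs ` {..<length xs})) ` nlists E u S"
    unfolding nlists_def
    by (rule image_cong[OF refl], rule arg_cong[where f=Max], rule image_cong[OF refl])
       (simp only: eq' bterm_def)
  thus ?thesis unfolding btime_def n bt.simps(2) Let_def by (simp only: if_not_P[OF ne])
qed

lemma btime_empty:
  assumes "{v \<in> S. E u v} = {}"
  shows "btime E w \<rho> u S = 0"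
  using assms by (cases "card S") (auto simp: btime_def)

lemma nlists_fin: "finite S \<Longrightarrow> finite (nlists E u S)"
  unfolding nlists_def
  by (rule finite_subset[OF _ finite_subset_distinct[of S]]) auto

lemma nlists_ne: "finite S \<Longrightarrow> nlists E u S \<noteq> {}"
  unfolding nlists_def using finite_distinct_list[of "{v \<in> S. E u v}"] by auto

lemma btime_ge:
  assumes irr: "\<forall>x. \<not> E x x" and rho: "0 \<le> \<rho>" and fin: "finite S" and u: "u \<in> S"
    and c: "c \<in> S" and uc: "E u c"
  shows "\<rho> + w u c + btime E w \<rho> c (comp E (S-{u}) c) \<le> btime E w \<rho> u S"
proof -
  have ne: "{v \<in> S. E u v} \<noteq> {}" using c uc by auto
  have "\<rho> + w u c + btime E w \<rho> c (comp E (S-{u}) c) \<le> Max (bterm E w \<rho> u S xs ` {..<length xs})"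
    if xs: "xs \<in> nlists E u S" for xs
  proof -
    have "c \<in> set xs" using xs c uc by (auto simp: nlists_def)
    then obtain j where j: "j < length xs" "xs ! j = c" by (auto simp: in_set_conv_nth)
    have "\<rho> \<le> real (Suc j) * \<rho>" using rho by (simp add: mult_le_cancel_right1)
    hence "\<rho> + w u c + btime E w \<rho> c (comp E (S-{u}) c) \<le> bterm E w \<rho> u S xs j"
      using j by (simp add: bterm_def)
    also have "\<dots> \<le> Max (bterm E w \<rho> u S xs ` {..<length xs})"
      using j by (intro Max_ge) auto
    finally show ?thesis .
  qed
  moreover have "finite ((\<lambda>xs. Max (bterm E w \<rho> u S xs ` {..<length xs})) ` nlists E u S)"
    using nlists_fin[OF fin, of E u] by simp
  ultimately show ?thesis using btime_eq[OF irr fin u ne, of w \<rho>] nlists_ne[OF fin, of E u]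
    by (simp add: Min_ge_iff)
qed

lemma btime_le:
  assumes irr: "\<forall>x. \<not> E x x" and fin: "finite S" and u: "u \<in> S"
    and xs: "xs \<in> nlists E u S" and ne: "{v \<in> S. E u v} \<noteq> {}"
  shows "btime E w \<rho> u S \<le> Max (bterm E w \<rho> u S xs ` {..<length xs})"
  unfolding btime_eq[OF irr fin u ne]
  by (rule Min_le) (use nlists_fin[OF fin, of E u] xs in auto)

lemma btime_opt:
  assumes irr: "\<forall>x. \<not> E x x" and fin: "finite S" and u: "u \<in> S" and ne: "{v \<in> S. E u v} \<noteq> {}"
  shows "\<exists>xs\<in>nlists E u S. btime E w \<rho> u S = Max (bterm E w \<rho> u S xs ` {..<length xs})"
proof -
  have "Min ((\<lambda>xs. Max (bterm E w \<rho> u S xs ` {..<length xs})) ` nlists E u S)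
        \<in> (\<lambda>xs. Max (bterm E w \<rho> u S xs ` {..<length xs})) ` nlists E u S"
    by (rule Min_in) (use nlists_fin[OF fin, of E u] nlists_ne[OF fin, of E u] in auto)
  thus ?thesis unfolding btime_eq[OF irr fin u ne] by auto
qed

theorem lemma6:
  fixes E :: "'a \<Rightarrow> 'a \<Rightarrow> bool" and V :: "'a set"
    and lo hi w :: "'a \<Rightarrow> 'a \<Rightarrow> real" and \<rho> :: real and k :: 'a
  assumes "is_tree E V"
    and "valid_intervals E lo hi"
    and "\<rho> > 0"
    and "is_scenario E lo hi w"
    and "prime_bcenter E V w \<rho> k"
    and "is_star E (bcenters E V w \<rho>)"
  shows "star_center E (bcenters E V w \<rho>) k \<and> (\<forall>v \<in> bcenters E V w \<rho> - {k}. E k v)"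
proof -
  note T = assms(1)
  note tp = tree_props[OF T]
  have irr: "\<forall>x. \<not> E x x" by (rule tp(3))
  have sym: "\<forall>x y. E x y \<longrightarrow> E y x" by (rule tp(2))
  have fin: "finite V" by (rule tp(1))
  have wnn: "0 \<le> w x y" if "E x y" for x y
    using assms(2,4) that unfolding valid_intervals_def is_scenario_def by force
  have wsym: "w x y = w y x" if "E x y" for x y
    using assms(4) that unfolding is_scenario_def by blast
  let ?B = "bcenters E V w \<rho>"
  have kB: "k \<in> ?B" using assms(5) by (simp add: prime_bcenter_def)
  have BV: "?B \<subseteq> V" by (auto simp: bcenters_def)
  have finB: "finite ?B" using finite_subset[OF BV fin] .
  have kV: "k \<in> V" using kB BV by auto
  have rho0: "0 \<le> \<rho>" using assms(3) by simp
  have main: "E k v" if vB: "v \<in> ?B" and vk: "v \<noteq> k" for v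
  proof (rule ccontr)
    assume nE: "\<not> E k v"
    obtain c where cB: "c \<in> ?B" and kc: "E k c" and cv: "E c v"
      using star_path[OF assms(6) finB irr sym kB vB _ nE] vk by auto
    have vV: "v \<in> V" and cV: "c \<in> V" using vB cB BV by auto
    have ck: "E c k" and vc: "E v c" using kc cv sym by auto
    have kc': "k \<noteq> c" and cv': "c \<noteq> v" using kc cv irr by auto
    define A where "A = btime E w \<rho> k (comp E (V-{c}) k)"
    define Cc where "Cc = comp E (V-{k}) c"
    define D where "D = btime E w \<rho> c Cc"
    have DA: "D \<le> A"
      using assms(5) kc Tbar_eq[OF T kc] Tbar_eq[OF T ck]
      unfolding prime_bcenter_def A_def D_def Cc_def by auto
    define S2 where "S2 = comp E (V-{v}) c"
    have S2V: "S2 \<subseteq> V - {v}" unfolding S2_def by (rule comp_subset) (use cV cv' in auto)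
    have finS2: "finite S2" using finite_subset[OF S2V] fin by auto
    have cS2: "c \<in> S2" unfolding S2_def by (rule comp_self)
    have kS2: "k \<in> S2"
    proof -
      have "restr E (V-{v}) c k" using ck cV kV cv' vk by (auto simp: restr_def)
      thus ?thesis unfolding S2_def comp_def by auto
    qed
    have L1: "\<rho> + w v c + btime E w \<rho> c S2 \<le> btime E w \<rho> v V"
      unfolding S2_def by (rule btime_ge[OF irr rho0 fin vV cV vc])
    have L2: "\<rho> + w c k + btime E w \<rho> k (comp E (S2-{c}) k) \<le> btime E w \<rho> c S2"
      by (rule btime_ge[OF irr rho0 finS2 cS2 kS2 ck])
    have L3: "comp E (S2-{c}) k = comp E (V-{c}) k"
    proof
      show "comp E (S2-{c}) k \<subseteq> comp E (V-{c}) k" by (rule comp_mono) (use S2V in auto)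
    next
      have kVc: "k \<in> V - {c}" using kV kc' by auto
      have sub1: "comp E (V-{c}) k \<subseteq> V - {c}" by (rule comp_subset[OF kVc])
      have nv: "v \<notin> comp E (V-{c}) k"
      proof
        assume "v \<in> comp E (V-{c}) k"
        hence "k \<in> comp E (V-{c}) v" using comp_sym sym by metis
        thus False using tree_disj[OF T cv] kS2 unfolding S2_def by auto
      qed
      have sub2: "comp E (V-{c}) k \<subseteq> V - {v}" using sub1 nv by auto
      have "comp E (V-{c}) k \<subseteq> S2 - {c}"
      proof
        fix x assume x: "x \<in> comp E (V-{c}) k"
        have "(restr E (V-{c}))\<^sup>*\<^sup>* k x" using x by (simp add: comp_def)
        hence "(restr E (V-{v}))\<^sup>*\<^sup>* k x" using comp_move sub2 by metis
        hence "x \<in> comp E (V-{v}) k" by (simp add: comp_def)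
        hence "x \<in> S2" using kS2 comp_trans unfolding S2_def by metis
        thus "x \<in> S2 - {c}" using x sub1 by auto
      qed
      thus "comp E (V-{c}) k \<subseteq> comp E (S2-{c}) k" by (rule comp_mono_sub)
    qed
    have low: "2 * \<rho> + w v c + w k c + A \<le> btime E w \<rho> v V"
      using L1 L2[unfolded L3] wsym[OF kc] unfolding A_def by linarith
    define S' where "S' = comp E (V-{c}) k"
    have S'eq: "S' = V - Cc" unfolding S'_def Cc_def using tree_split[OF T kc] by simp
    have CcV: "Cc \<subseteq> V - {k}" unfolding Cc_def by (rule comp_subset) (use cV kc' in auto)
    have kS': "k \<in> S'" using S'eq CcV kV by auto
    have finS': "finite S'" using S'eq fin by auto
    have cCc: "c \<in> Cc" unfolding Cc_def by (rule comp_self)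
    have notCc: "y \<notin> Cc" if "E k y" "y \<noteq> c" for y
    proof
      assume "y \<in> Cc"
      hence "c \<in> comp E (V-{k}) y" using comp_sym sym unfolding Cc_def by metis
      moreover have "c \<in> comp E (V-{y}) k"
      proof -
        have "restr E (V-{y}) k c" using kc kV cV that irr by (auto simp: restr_def)
        thus ?thesis unfolding comp_def by auto
      qed
      ultimately show False using tree_disj[OF T that(1)] by auto
    qed
    have N': "{y \<in> S'. E k y} = {y \<in> V. E k y} - {c}"
      using S'eq notCc cCc by auto
    have compeq: "comp E (S'-{k}) y = comp E (V-{k}) y" if y: "y \<in> {y \<in> S'. E k y}" for y
    proof
      show "comp E (S'-{k}) y \<subseteq> comp E (V-{k}) y" by (rule comp_mono) (use S'eq in auto)
    next
      have yV: "y \<in> V - {k}" using y N' irr by auto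
      have "comp E (V-{k}) y \<subseteq> S' - {k}"
      proof
        fix x assume x: "x \<in> comp E (V-{k}) y"
        have "x \<in> V - {k}" using comp_subset[OF yV] x by auto
        moreover have "x \<notin> Cc"
        proof
          assume "x \<in> Cc"
          have "y \<in> comp E (V-{k}) x" using x comp_sym sym by metis
          hence "y \<in> Cc" using \<open>x \<in> Cc\<close> comp_trans unfolding Cc_def by metis
          thus False using y N' notCc by auto
        qed
        ultimately show "x \<in> S' - {k}" using S'eq by auto
      qed
      thus "comp E (V-{k}) y \<subseteq> comp E (S'-{k}) y" by (rule comp_mono_sub)
    qed
    have neV: "{y \<in> V. E k y} \<noteq> {}" using kc cV by auto
    have b0: "bterm E w \<rho> k V (c # ys) 0 = \<rho> + w k c + D" for ys
      by (simp add: bterm_def D_def Cc_def)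
    have up: "btime E w \<rho> k V \<le> \<rho> + w k c + A"
    proof (cases "{y \<in> S'. E k y} = {}")
      case True
      have "[c] \<in> nlists E k V" unfolding nlists_def using True N' kc cV by auto
      hence "btime E w \<rho> k V \<le> Max (bterm E w \<rho> k V [c] ` {..<length [c]})"
        by (rule btime_le[OF irr fin kV _ neV])
      also have "\<dots> = \<rho> + w k c + D" using b0[of "[]"] by (simp add: lessThan_Suc)
      finally show ?thesis using DA by linarith
    next
      case False
      obtain ys where ys: "ys \<in> nlists E k S'" and Aeq: "A = Max (bterm E w \<rho> k S' ys ` {..<length ys})"
        using btime_opt[OF irr finS' kS' False, of w \<rho>] unfolding A_def S'_def by auto
      have ysN: "set ys = {y \<in> V. E k y} - {c}" "distinct ys" using ys N' by (auto simp: nlists_def)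
      have "c # ys \<in> nlists E k V" unfolding nlists_def using ysN kc cV by auto
      hence "btime E w \<rho> k V \<le> Max (bterm E w \<rho> k V (c # ys) ` {..<length (c # ys)})"
        by (rule btime_le[OF irr fin kV _ neV])
      also have "\<dots> \<le> \<rho> + w k c + A"
      proof (rule Max.boundedI)
        show "finite (bterm E w \<rho> k V (c # ys) ` {..<length (c # ys)})" by simp
        show "bterm E w \<rho> k V (c # ys) ` {..<length (c # ys)} \<noteq> {}" by (simp add: lessThan_empty_iff)
        fix a assume "a \<in> bterm E w \<rho> k V (c # ys) ` {..<length (c # ys)}"
        then obtain j where j: "j \<in> {..<length (c # ys)}" and aj: "a = bterm E w \<rho> k V (c # ys) j" by auto
        have "bterm E w \<rho> k V (c # ys) j \<le> \<rho> + w k c + A"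
        proof (cases j)
          case 0 then show ?thesis using b0 DA by simp
        next
          case (Suc i)
          have i: "i < length ys" using j Suc by simp
          have yi: "ys ! i \<in> {y \<in> S'. E k y}" using ys nth_mem[OF i] by (auto simp: nlists_def)
          have "bterm E w \<rho> k V (c # ys) j = \<rho> + bterm E w \<rho> k S' ys i"
            using Suc compeq[OF yi] by (simp add: bterm_def algebra_simps)
          also have "bterm E w \<rho> k S' ys i \<le> A" unfolding Aeq using i by (intro Max_ge) auto
          hence "\<rho> + bterm E w \<rho> k S' ys i \<le> \<rho> + w k c + A" using wnn[OF kc] by linarith
          finally show ?thesis .
        qed
        thus "a \<le> \<rho> + w k c + A" using aj by simp
      qed
      finally show ?thesis .
    qed
    have "btime E w \<rho> v V \<le> btime E w \<rho> k V" using vB kV by (auto simp: bcenters_def)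
    thus False using up low assms(3) wnn[OF vc] by linarith
  qed
  have sc: "star_center E ?B k"
  proof -
    have "card ?B \<le> 2 \<or> 1 < card {y \<in> ?B. E k y}"
    proof (cases "card ?B \<le> 2")
      case True then show ?thesis by simp
    next
      case False
      assume "\<not> card ?B \<le> 2"
      have "?B - {k} \<subseteq> {y \<in> ?B. E k y}" using main by auto
      hence "card (?B - {k}) \<le> card {y \<in> ?B. E k y}" using finB by (intro card_mono) auto
      moreover have "card (?B - {k}) = card ?B - 1" using kB finB by simp
      ultimately show ?thesis using \<open>\<not> card ?B \<le> 2\<close> by linarith
    qed
    thus ?thesis using kB by (simp add: star_center_def)
  qed
  show ?thesis using sc main by auto
qed

end
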